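(* Let $P$ be a $d$-dimensional convex polytope and $O$ an acyclic orientation of its graph $G_P$. Then $f^O=\sum_{i=0}^d f_i(P)$ if and only if all of the following hold: (1) each nonempty face $F$ of $P$ has a unique sink (of $G_F$ with respect to $O$); (2) each nonempty face $F$ of $P$ is simple at its sink, i.e. the sink has degree $\dim F$ in $G_F$; (3) for each vertex $v$ of $P$, there is a face of $P$ which has $v$ as its sink and contains every edge of $P$ oriented towards $v$.
   Context: The graph $G_P=(V_P,E_P)$ of a polytope $P$ has vertex set the vertices of $P$, with two vertices adjacent iff some $1$-dimensional face of $P$ contains both; for a face $F$, $G_F$ is its graph, oriented by restricting $O$. $f_i(P)$ is the number of $i$-dimensional faces of $P$. For an orientation $O$ of a graph $G=(V,E)$, $f^O:=\sum_{v\in V}2^{\operatorname{indeg}(v)}$. A sink of a graph with respect to an orientation is a vertex all of whose incident edges are oriented towards it. *)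

theory Defs
  imports "HOL-Analysis.Analysis"
begin

definition poly_vertices :: "'a::euclidean_space set \<Rightarrow> 'a set" where
  "poly_vertices F = {v. v extreme_point_of F}"

definition poly_adj :: "'a::euclidean_space set \<Rightarrow> 'a \<Rightarrow> 'a \<Rightarrow> bool" where
  "poly_adj F u v \<longleftrightarrow> u \<in> poly_vertices F \<and> v \<in> poly_vertices F \<and> u \<noteq> v \<and>
     (\<exists>e. e face_of F \<and> aff_dim e = 1 \<and> u \<in> e \<and> v \<in> e)"

definition f_num :: "nat \<Rightarrow> 'a::euclidean_space set \<Rightarrow> nat" where
  "f_num i P = card {F. F face_of P \<and> aff_dim F = int i}"

text \<open>Ori (a relation, Ori u v meaning the edge uv is oriented from u to v) is an
  orientation of the graph G_P.\<close>
definition is_orientation :: "'a::euclidean_space set \<Rightarrow> ('a \<Rightarrow> 'a \<Rightarrow> bool) \<Rightarrow> bool" where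
  "is_orientation P Ori \<longleftrightarrow>
     (\<forall>u v. Ori u v \<longrightarrow> poly_adj P u v) \<and>
     (\<forall>u v. poly_adj P u v \<longrightarrow> (Ori u v \<or> Ori v u)) \<and>
     (\<forall>u v. \<not> (Ori u v \<and> Ori v u))"

definition acyclic_orientation :: "('a \<Rightarrow> 'a \<Rightarrow> bool) \<Rightarrow> bool" where
  "acyclic_orientation Ori \<longleftrightarrow> (\<forall>v. \<not> Ori\<^sup>+\<^sup>+ v v)"

definition indeg :: "('a \<Rightarrow> 'a \<Rightarrow> bool) \<Rightarrow> 'a \<Rightarrow> nat" where
  "indeg Ori v = card {u. Ori u v}"

definition fO :: "'a::euclidean_space set \<Rightarrow> ('a \<Rightarrow> 'a \<Rightarrow> bool) \<Rightarrow> nat" where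
  "fO P Ori = (\<Sum>v\<in>poly_vertices P. 2 ^ indeg Ori v)"

definition is_sink :: "'a::euclidean_space set \<Rightarrow> ('a \<Rightarrow> 'a \<Rightarrow> bool) \<Rightarrow> 'a \<Rightarrow> bool" where
  "is_sink F Ori v \<longleftrightarrow> v \<in> poly_vertices F \<and> (\<forall>u. poly_adj F u v \<longrightarrow> Ori u v)"

definition degree_in :: "'a::euclidean_space set \<Rightarrow> 'a \<Rightarrow> nat" where
  "degree_in F v = card {u. poly_adj F u v}"

end

theory Submission
  imports Defs
begin

abbreviation NB :: "'a::euclidean_space set \<Rightarrow> 'a \<Rightarrow> 'a set" where
  "NB F v \<equiv> {u. poly_adj F u v}"

lemma adj_sym: "poly_adj F u v \<longleftrightarrow> poly_adj F v u"
  unfolding poly_adj_def by blast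

lemma vert_face: "H face_of F \<Longrightarrow> v \<in> poly_vertices H \<Longrightarrow> v \<in> poly_vertices F"
  unfolding poly_vertices_def using extreme_point_of_face by blast

lemma vert_face2: "H face_of F \<Longrightarrow> v \<in> poly_vertices F \<Longrightarrow> v \<in> H \<Longrightarrow> v \<in> poly_vertices H"
  unfolding poly_vertices_def using extreme_point_of_face by blast

lemma vert_in: "v \<in> poly_vertices F \<Longrightarrow> v \<in> F"
  unfolding poly_vertices_def extreme_point_of_def by blast

lemma adj_face: "H face_of F \<Longrightarrow> poly_adj H u v \<Longrightarrow> poly_adj F u v"
  unfolding poly_adj_def using vert_face face_of_trans by blast

lemma adj_face2:
  assumes "H face_of F" "poly_adj F u v" "u \<in> H" "v \<in> H"
  shows "poly_adj H u v"
proof -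
  obtain e where e: "e face_of F" "aff_dim e = 1" "u \<in> e" "v \<in> e" and uv: "u \<noteq> v"
    "u \<in> poly_vertices F" "v \<in> poly_vertices F"
    using assms(2) unfolding poly_adj_def by blast
  have "e \<inter> H face_of F" using e(1) assms(1) face_of_Int by blast
  hence fe: "e \<inter> H face_of e" using face_of_subset e(1) face_of_imp_subset by blast
  have "aff_dim {u,v} \<le> aff_dim (e \<inter> H)" using e assms by (intro aff_dim_subset) auto
  hence "1 \<le> aff_dim (e \<inter> H)" using uv by simp
  hence "e \<inter> H = e" using face_of_aff_dim_lt[OF face_of_imp_convex[OF e(1)] fe] e(2) by fastforce
  hence "e \<subseteq> H" by blast
  hence "e face_of H" using face_of_subset[OF e(1) _ face_of_imp_subset[OF assms(1)]] by blast
  thus ?thesis unfolding poly_adj_def using e uv assms vert_face2 by blast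
qed

lemma finite_verts: "polytope F \<Longrightarrow> finite (poly_vertices F)"
  unfolding poly_vertices_def using finite_polyhedron_extreme_points polytope_imp_polyhedron by blast

lemma finite_NB: "polytope F \<Longrightarrow> finite (NB F v)"
  by (rule finite_subset[OF _ finite_verts]) (auto simp: poly_adj_def)

lemma NB_sub: "NB F v \<subseteq> F"
  using vert_in by (auto simp: poly_adj_def)

lemma v_notin_NB: "v \<notin> NB F v" by (auto simp: poly_adj_def)

lemma cover_lemma:
  fixes S T :: "'a::euclidean_space set"
  assumes "S \<subseteq> affine hull A" "S \<subseteq> T" "aff_dim T \<le> aff_dim S"
  shows "T \<subseteq> affine hull A"
proof -
  have "aff_dim S = aff_dim T" using aff_dim_subset[OF assms(2)] assms(3) by simp
  hence "affine hull S = affine hull T" using aff_dim_eq_full_gen[OF assms(2)] by simp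
  moreover have "affine hull S \<subseteq> affine hull A"
    using assms(1) by (metis hull_hull hull_mono)
  ultimately show ?thesis using hull_subset[of T affine] by blast
qed

lemma facets_through:
  fixes F :: "'a::euclidean_space set"
  assumes "polytope F" "v \<in> poly_vertices F" "F \<noteq> {v}"
  shows "{v} = \<Inter>{H. H facet_of F \<and> v \<in> H}"
proof -
  have "{v} face_of F" using assms(2) face_of_singleton unfolding poly_vertices_def by blast
  from face_of_polyhedron[OF polytope_imp_polyhedron[OF assms(1)] this] assms(3)
  show ?thesis by simp
qed

lemma UNIV_not_sing: "(UNIV :: 'a::euclidean_space set) \<noteq> {v}"
proof
  assume "(UNIV :: 'a set) = {v}"
  then have "v + (SOME b. b \<in> Basis) = v" by blast
  then show False using SOME_Basis nonzero_Basis by force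
qed

lemma aff_nb_aux:
  fixes F :: "'a::euclidean_space set"
  shows "polytope F \<Longrightarrow> v \<in> poly_vertices F \<Longrightarrow> aff_dim F = int n \<Longrightarrow>
     F \<subseteq> affine hull (insert v (NB F v))"
proof (induction n arbitrary: F rule: less_induct)
  case (less n F)
  have vF: "v \<in> F" using less.prems vert_in by blast
  have cF: "compact F" "convex F" using less.prems polytope_imp_compact polytope_imp_convex by auto
  show ?case
  proof (cases "n = 0")
    case True
    then obtain a where "F = {a}" using less.prems aff_dim_eq_0 by auto
    then show ?thesis using vF hull_subset by fastforce
  next
    case n0: False
    have Fnv: "F \<noteq> {v}" using less.prems n0 by auto
    show ?thesis
    proof (cases "n = 1")
      case True
      have "F = convex hull poly_vertices F"
        using Krein_Milman_Minkowski[OF cF] unfolding poly_vertices_def by simp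
      moreover have "poly_vertices F \<noteq> {v}"
      proof
        assume "poly_vertices F = {v}"
        with \<open>F = _\<close> have "F = {v}" by simp
        with Fnv show False by simp
      qed
      ultimately obtain w where w: "w \<in> poly_vertices F" "w \<noteq> v"
        using less.prems(2) by blast
      have "F face_of F" using cF face_of_refl by blast
      hence "poly_adj F w v" unfolding poly_adj_def using w less.prems vert_in True by auto
      hence "{v, w} \<subseteq> affine hull (insert v (NB F v))" using hull_subset by fastforce
      moreover have "aff_dim F \<le> aff_dim {v, w}" using True less.prems w by simp
      ultimately show ?thesis using cover_lemma[of "{v,w}" _ F] vF w vert_in by blast
    next
      case n1: False
      let ?HS = "{H. H facet_of F \<and> v \<in> H}"
      have inter: "{v} = \<Inter>?HS" using facets_through less.prems Fnv by blast
      have sub: "H \<subseteq> affine hull (insert v (NB F v))" if "H \<in> ?HS" for H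
      proof -
        have H: "H face_of F" "aff_dim H = aff_dim F - 1" "v \<in> H" using that by (auto simp: facet_of_def)
        have "polytope H" using H face_of_polytope_polytope less.prems by blast
        moreover have "v \<in> poly_vertices H" using vert_face2 H less.prems by blast
        moreover have "aff_dim H = int (n - 1)" using H less.prems n0 by simp
        ultimately have "H \<subseteq> affine hull (insert v (NB H v))" using less.IH[of "n-1" H] n0 by simp
        moreover have "NB H v \<subseteq> NB F v" using adj_face H by blast
        ultimately show ?thesis by (meson hull_mono insert_mono subset_trans)
      qed
      obtain H1 where H1: "H1 \<in> ?HS"
        using inter UNIV_not_sing[of v] by (metis Inf_empty ex_in_conv mem_Collect_eq)
      obtain H2 where H2: "H2 \<in> ?HS" "H2 \<noteq> H1"
      proof -
        have "?HS \<noteq> {H1}"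
        proof
          assume "?HS = {H1}"
          with inter have "H1 = {v}" by simp
          moreover have "aff_dim H1 = aff_dim F - 1" using H1 by (simp add: facet_of_def)
          ultimately show False using less.prems n0 n1 by simp
        qed
        with H1 that show thesis by blast
      qed
      have f1: "H1 face_of F" "aff_dim H1 = aff_dim F - 1" using H1 by (auto simp: facet_of_def)
      have f2: "H2 face_of F" "aff_dim H2 = aff_dim F - 1" using H2 by (auto simp: facet_of_def)
      have "\<not> H2 \<subseteq> affine hull H1"
      proof
        assume a: "H2 \<subseteq> affine hull H1"
        have "H1 = affine hull H1 \<inter> F" using face_of_imp_eq_affine_Int[OF cF(2) f1(1)] .
        hence "H2 \<subseteq> H1" using a face_of_imp_subset[OF f2(1)] by blast
        hence "H2 face_of H1" using face_of_subset[OF f2(1) _ face_of_imp_subset[OF f1(1)]] by blast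
        hence "aff_dim H2 < aff_dim H1"
          using face_of_aff_dim_lt[OF face_of_imp_convex[OF f1(1)]] H2(2) by blast
        thus False using f1 f2 by simp
      qed
      then obtain x where x: "x \<in> H2" "x \<notin> affine hull H1" by blast
      have "aff_dim (insert x H1) = aff_dim F"
        using aff_dim_insert[of x H1] x f1 by simp
      moreover have "insert x H1 \<subseteq> affine hull (insert v (NB F v))" using sub H1 H2 x by blast
      moreover have "insert x H1 \<subseteq> F" using x f1 f2 face_of_imp_subset by blast
      ultimately show ?thesis using cover_lemma by (metis order_refl)
    qed
  qed
qed

lemma aff_nb:
  fixes F :: "'a::euclidean_space set"
  assumes "polytope F" "v \<in> poly_vertices F"
  shows "affine hull F = affine hull (insert v (NB F v))"
proof -
  have "F \<noteq> {}" using assms vert_in by blast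
  then obtain n where "aff_dim F = int n" by (metis aff_dim_negative_iff nonneg_int_cases not_le)
  then have "F \<subseteq> affine hull (insert v (NB F v))" using aff_nb_aux assms by blast
  moreover have "insert v (NB F v) \<subseteq> F" using NB_sub vert_in assms by blast
  ultimately show ?thesis by (metis hull_hull hull_mono subset_antisym)
qed


lemma face_det:
  fixes P :: "'a::euclidean_space set"
  assumes "polytope P" "F face_of P" "G face_of P" "v \<in> poly_vertices F" "v \<in> poly_vertices G"
    "NB F v = NB G v"
  shows "F = G"
proof -
  have "affine hull F = affine hull G"
    using aff_nb[of F v] aff_nb[of G v] assms face_of_polytope_polytope by metis
  thus ?thesis using face_of_imp_eq_affine_Int[OF polytope_imp_convex[OF assms(1)]] assms(2,3) by metis
qed

lemma simple_sub_aux: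
  fixes F :: "'a::euclidean_space set"
  shows "polytope F \<Longrightarrow> v \<in> poly_vertices F \<Longrightarrow> card (NB F v) = n \<Longrightarrow> int n = aff_dim F \<Longrightarrow>
    S \<subseteq> NB F v \<Longrightarrow> \<exists>G. G face_of F \<and> v \<in> G \<and> NB G v = S"
proof (induction n arbitrary: F)
  case 0
  then have "S = NB F v" by (metis card_0_eq finite_NB subset_empty)
  then show ?case using 0 vert_in face_of_refl polytope_imp_convex by blast
next
  case (Suc n F)
  show ?case
  proof (cases "S = NB F v")
    case True
    then show ?thesis using Suc vert_in face_of_refl polytope_imp_convex by blast
  next
    case False
    then obtain u where u: "u \<in> NB F v" "u \<notin> S" using Suc.prems by blast
    have uv: "u \<noteq> v" using u v_notin_NB by blast
    have Fnv: "F \<noteq> {v}" using u NB_sub uv by blast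
    have inter: "{v} = \<Inter>{H. H facet_of F \<and> v \<in> H}" using facets_through Suc.prems Fnv by blast
    then obtain H where H: "H facet_of F" "v \<in> H" "u \<notin> H" using uv by blast
    have Hf: "H face_of F" "aff_dim H = aff_dim F - 1" using H by (auto simp: facet_of_def)
    have pH: "polytope H" using Hf face_of_polytope_polytope Suc.prems by blast
    have vH: "v \<in> poly_vertices H" using vert_face2 Hf H Suc.prems by blast
    have sub1: "NB H v \<subseteq> NB F v - {u}" using adj_face[OF Hf(1)] H(3) NB_sub by blast
    have "aff_dim H \<le> aff_dim (insert v (NB H v))"
      using aff_nb[OF pH vH] aff_dim_affine_hull2 by (metis order_refl)
    also have "\<dots> \<le> int (card (insert v (NB H v))) - 1"
      using aff_dim_le_card finite_NB[OF pH] by blast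
    also have "\<dots> = int (card (NB H v))" proof -
      have "v \<notin> NB H v" by (rule v_notin_NB)
      thus ?thesis using finite_NB[OF pH, of v] by simp
    qed
    finally have c1: "int n \<le> int (card (NB H v))" using Hf Suc.prems by simp
    have fin: "finite (NB F v - {u})" using finite_NB Suc.prems by blast
    have c2: "card (NB F v - {u}) = n" using Suc.prems u by simp
    have eq: "NB H v = NB F v - {u}"
      using card_subset_eq[OF fin sub1] card_mono[OF fin sub1] c1 c2 by simp
    have "card (NB H v) = n" using eq c2 by simp
    moreover have "int n = aff_dim H" using Hf Suc.prems by simp
    moreover have "S \<subseteq> NB H v" using eq u Suc.prems by blast
    ultimately obtain G where "G face_of H" "v \<in> G" "NB G v = S" using Suc.IH[OF pH vH] by blast
    then show ?thesis using face_of_trans Hf by blast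
  qed
qed

lemma sink_exists:
  fixes P :: "'a::euclidean_space set"
  assumes "polytope P" "is_orientation P Ori" "acyclic_orientation Ori" "F face_of P" "F \<noteq> {}"
  shows "\<exists>v. is_sink F Ori v"
proof -
  have pF: "polytope F" using assms face_of_polytope_polytope by blast
  obtain x where x: "x \<in> poly_vertices F"
    using extreme_point_exists_convex[OF polytope_imp_compact[OF pF] polytope_imp_convex[OF pF] assms(5)]
    unfolding poly_vertices_def by blast
  define r where "r = {(y, z). z \<in> poly_vertices F \<and> y \<in> poly_vertices F \<and> Ori z y}"
  have fr: "finite r" unfolding r_def
    by (rule finite_subset[of _ "poly_vertices F \<times> poly_vertices F"]) (auto simp: finite_verts[OF pF])
  have tr: "(a, b) \<in> r\<^sup>+ \<Longrightarrow> Ori\<^sup>+\<^sup>+ b a" for a b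
  proof (induction rule: trancl_induct)
    case (base y) then show ?case by (auto simp: r_def)
  next
    case (step y z) then show ?case by (auto simp: r_def intro: tranclp_trans)
  qed
  have "acyclic r" unfolding acyclic_def using tr assms(3) unfolding acyclic_orientation_def by blast
  hence "wf r" using finite_acyclic_wf fr by blast
  then obtain z where z: "z \<in> poly_vertices F" "\<And>y. (y, z) \<in> r \<Longrightarrow> y \<notin> poly_vertices F"
    using wfE_min[of r x "poly_vertices F"] x by blast
  have "is_sink F Ori z"
    unfolding is_sink_def
  proof (intro conjI allI impI)
    fix u assume a: "poly_adj F u z"
    hence "poly_adj P u z" using adj_face assms(4) by blast
    hence "Ori u z \<or> Ori z u" using assms(2) unfolding is_orientation_def by blast
    moreover have "u \<in> poly_vertices F" using a by (simp add: poly_adj_def)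
    ultimately show "Ori u z" using z unfolding r_def by blast
  qed (rule z(1))
  thus ?thesis by blast
qed


theorem lemma2p11:
  fixes P :: "'a::euclidean_space set" and Ori :: "'a \<Rightarrow> 'a \<Rightarrow> bool" and d :: nat
  assumes "polytope P" and "aff_dim P = int d"
    and "is_orientation P Ori" and "acyclic_orientation Ori"
  shows "fO P Ori = (\<Sum>i=0..d. f_num i P) \<longleftrightarrow>
    ((\<forall>F. F face_of P \<and> F \<noteq> {} \<longrightarrow> (\<exists>!v. is_sink F Ori v)) \<and>
     (\<forall>F. F face_of P \<and> F \<noteq> {} \<longrightarrow>
        (\<forall>v. is_sink F Ori v \<longrightarrow> int (degree_in F v) = aff_dim F)) \<and>
     (\<forall>v\<in>poly_vertices P. \<exists>F. F face_of P \<and> is_sink F Ori v \<and>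
        (\<forall>u. Ori u v \<longrightarrow> convex hull {u, v} \<subseteq> F)))"
proof -
  note pP = assms(1)
  have cvP: "convex P" using pP polytope_imp_convex by blast
  define Phi where "Phi = {F. F face_of P \<and> F \<noteq> {}}"
  define In where "In v = {u. Ori u v}" for v
  define Sig where "Sig = Sigma (poly_vertices P) (\<lambda>v. Pow (In v))"
  define s where "s F = (SOME v. is_sink F Ori v)" for F
  define phi where "phi F = (s F, NB F (s F))" for F
  have In_sub: "In v \<subseteq> poly_vertices P" for v
    using assms(3) unfolding In_def is_orientation_def poly_adj_def by blast
  have finV: "finite (poly_vertices P)" using finite_verts pP by blast
  have finIn: "finite (In v)" for v using In_sub finV finite_subset by blast
  have finPhi: "finite Phi" unfolding Phi_def
    by (rule finite_subset[OF _ finite_polytope_faces[OF pP]]) auto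
  have finSig: "finite Sig" unfolding Sig_def using finV finIn by auto
  have cSig: "card Sig = fO P Ori"
    unfolding Sig_def fO_def indeg_def
    using finIn by (subst card_SigmaI) (auto simp: finV card_Pow In_def)
  have cPhi: "(\<Sum>i=0..d. f_num i P) = card Phi"
  proof -
    have eq: "Phi = (\<Union>i\<in>{0..d}. {F. F face_of P \<and> aff_dim F = int i})"
    proof (rule set_eqI, rule iffI)
      fix F assume "F \<in> Phi"
      hence F: "F face_of P" "F \<noteq> {}" by (auto simp: Phi_def)
      have "0 \<le> aff_dim F" using F(2) aff_dim_negative_iff by (metis not_le)
      moreover have "aff_dim F \<le> int d" using assms(2) aff_dim_subset face_of_imp_subset F by metis
      ultimately show "F \<in> (\<Union>i\<in>{0..d}. {F. F face_of P \<and> aff_dim F = int i})"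
        using F by (intro UN_I[of "nat (aff_dim F)"]) auto
    next
      fix F assume "F \<in> (\<Union>i\<in>{0..d}. {F. F face_of P \<and> aff_dim F = int i})"
      then show "F \<in> Phi" unfolding Phi_def by auto
    qed
    have "card Phi = (\<Sum>i=0..d. card {F. F face_of P \<and> aff_dim F = int i})"
      unfolding eq
      by (rule card_UN_disjoint) (auto intro: finite_subset[OF _ finite_polytope_faces[OF pP]])
    thus ?thesis unfolding f_num_def by simp
  qed
  have sink_s: "is_sink F Ori (s F)" if "F \<in> Phi" for F
    unfolding s_def using sink_exists[OF pP assms(3,4)] that by (auto simp: Phi_def intro: someI_ex)
  have sinkV: "is_sink F Ori v \<Longrightarrow> v \<in> poly_vertices F" for F v by (simp add: is_sink_def)
  have sinkIn: "is_sink F Ori v \<Longrightarrow> NB F v \<subseteq> In v" for F v by (auto simp: is_sink_def In_def)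
  have phiSig: "phi ` Phi \<subseteq> Sig"
  proof
    fix p assume "p \<in> phi ` Phi"
    then obtain F where F: "F \<in> Phi" "p = phi F" by blast
    have "s F \<in> poly_vertices P" using sinkV[OF sink_s[OF F(1)]] vert_face F(1) by (auto simp: Phi_def)
    thus "p \<in> Sig" using F sinkIn[OF sink_s[OF F(1)]] by (auto simp: Sig_def phi_def)
  qed
  have inj: "inj_on phi Phi"
  proof
    fix F G assume a: "F \<in> Phi" "G \<in> Phi" "phi F = phi G"
    hence "s F = s G" "NB F (s F) = NB G (s G)" by (auto simp: phi_def)
    moreover have "s F \<in> poly_vertices F" "s G \<in> poly_vertices G" using sinkV sink_s a by blast+
    moreover have "F face_of P" "G face_of P" using a by (auto simp: Phi_def)
    ultimately show "F = G" using face_det[OF pP, of F G "s F"] by simp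
  qed
  have "fO P Ori = (\<Sum>i=0..d. f_num i P) \<longleftrightarrow> phi ` Phi = Sig"
  proof -
    have "card (phi ` Phi) = card Phi" using card_image[OF inj] .
    thus ?thesis using card_subset_eq[OF finSig phiSig] cSig cPhi by auto
  qed
  also have "\<dots> \<longleftrightarrow>
    ((\<forall>F. F face_of P \<and> F \<noteq> {} \<longrightarrow> (\<exists>!v. is_sink F Ori v)) \<and>
     (\<forall>F. F face_of P \<and> F \<noteq> {} \<longrightarrow>
        (\<forall>v. is_sink F Ori v \<longrightarrow> int (degree_in F v) = aff_dim F)) \<and>
     (\<forall>v\<in>poly_vertices P. \<exists>F. F face_of P \<and> is_sink F Ori v \<and>
        (\<forall>u. Ori u v \<longrightarrow> convex hull {u, v} \<subseteq> F)))" (is "_ \<longleftrightarrow> ?C1 \<and> ?C2 \<and> ?C3")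
  proof
    assume eq: "phi ` Phi = Sig"
    have realize: "\<exists>G\<in>Phi. s G = v \<and> NB G v = S" if "v \<in> poly_vertices P" "S \<subseteq> In v" for v S
    proof -
      have "(v, S) \<in> phi ` Phi" using eq that by (auto simp: Sig_def)
      then show ?thesis by (auto simp: phi_def)
    qed
    have uniq: "s F = v" if F: "F \<in> Phi" "is_sink F Ori v" for F v
    proof -
      have FP: "F face_of P" using F by (simp add: Phi_def)
      have vV: "v \<in> poly_vertices P" using vert_face[OF FP] sinkV[OF F(2)] by blast
      obtain G where G: "G \<in> Phi" "s G = v" "NB G v = NB F v" using realize[OF vV sinkIn[OF F(2)]] by blast
      have "v \<in> poly_vertices G" using sink_s[OF G(1)] G(2) sinkV by blast
      hence "F = G" using face_det[OF pP FP _ sinkV[OF F(2)], of G] G by (auto simp: Phi_def)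
      thus ?thesis using G by simp
    qed
    have C1: ?C1
    proof (intro allI impI)
      fix F assume "F face_of P \<and> F \<noteq> {}"
      hence F: "F \<in> Phi" by (simp add: Phi_def)
      show "\<exists>!v. is_sink F Ori v"
        using sink_s[OF F] uniq[OF F] by blast
    qed
    have C2: ?C2
    proof (intro allI impI)
      fix F v assume "F face_of P \<and> F \<noteq> {}" and sk: "is_sink F Ori v"
      hence F: "F \<in> Phi" "F face_of P" by (auto simp: Phi_def)
      have pF: "polytope F" using F face_of_polytope_polytope pP by blast
      have vF: "v \<in> poly_vertices F" using sinkV[OF sk] .
      have vV: "v \<in> poly_vertices P" using vert_face[OF F(2) vF] .
      define N where "N = NB F v"
      have finN: "finite N" unfolding N_def using finite_NB[OF pF] .
      have vN: "v \<notin> N" unfolding N_def by (rule v_notin_NB)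
      have indep: "\<not> affine_dependent (insert v N)"
      proof
        assume "affine_dependent (insert v N)"
        hence "dependent ((\<lambda>x. -v + x) ` N)" using affine_dependent_iff_dependent[OF vN] by simp
        then obtain a where a: "a \<in> (\<lambda>x. -v + x) ` N" "a \<in> span ((\<lambda>x. -v + x) ` N - {a})"
          unfolding dependent_def by blast
        then obtain u where u: "u \<in> N" "a = -v + u" by blast
        have "(\<lambda>x. -v + x) ` N - {a} = (\<lambda>x. -v + x) ` (N - {u})" using u by auto
        hence "a \<in> span ((\<lambda>x. -v + x) ` (N - {u}))" using a by simp
        moreover have "u = v + a" using u by simp
        ultimately have "u \<in> (\<lambda>x. v + x) ` span ((\<lambda>x. -v + x) ` (N - {u}))"
          by (intro image_eqI[of _ _ a]) auto
        hence uA: "u \<in> affine hull (insert v (N - {u}))" by (simp add: affine_hull_insert_span_gen)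
        have "N - {u} \<subseteq> In v" using sinkIn[OF sk] N_def by blast
        then obtain G where G: "G \<in> Phi" "s G = v" "NB G v = N - {u}" using realize[OF vV] by blast
        have GP: "G face_of P" using G by (simp add: Phi_def)
        have pG: "polytope G" using GP face_of_polytope_polytope pP by blast
        have vG: "v \<in> poly_vertices G" using sink_s[OF G(1)] G(2) sinkV by blast
        have "u \<in> affine hull G" using aff_nb[OF pG vG] G(3) uA by simp
        moreover have "u \<in> P" using u N_def NB_sub face_of_imp_subset[OF F(2)] by blast
        ultimately have uG: "u \<in> G" using face_of_imp_eq_affine_Int[OF cvP GP] by blast
        have "poly_adj P u v" using adj_face[OF F(2)] u N_def by blast
        hence "poly_adj G u v" using adj_face2[OF GP _ uG vert_in[OF vG]] by blast
        thus False using G(3) by blast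
      qed
      have "int (card (insert v N)) = aff_dim (insert v N) + 1"
        using aff_dim_affine_independent[OF indep] .
      hence "int (card N) = aff_dim (insert v N)" using finN vN by simp
      also have "\<dots> = aff_dim F" using aff_nb[OF pF vF] N_def aff_dim_affine_hull2 by metis
      finally show "int (degree_in F v) = aff_dim F" by (simp add: degree_in_def N_def)
    qed
    have C3: ?C3
    proof
      fix v assume vV: "v \<in> poly_vertices P"
      obtain G where G: "G \<in> Phi" "s G = v" "NB G v = In v" using realize[OF vV] by blast
      have sk: "is_sink G Ori v" using sink_s[OF G(1)] G(2) by simp
      have "convex hull {u, v} \<subseteq> G" if "Ori u v" for u
      proof -
        have "poly_adj G u v" using G(3) that by (auto simp: In_def)
        then obtain e where e: "e face_of G" "u \<in> e" "v \<in> e" unfolding poly_adj_def by blast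
        have "convex hull {u, v} \<subseteq> e" using e face_of_imp_convex[OF e(1)] by (intro hull_minimal) auto
        thus ?thesis using face_of_imp_subset[OF e(1)] by blast
      qed
      thus "\<exists>F. F face_of P \<and> is_sink F Ori v \<and> (\<forall>u. Ori u v \<longrightarrow> convex hull {u, v} \<subseteq> F)"
        using G(1) sk by (auto simp: Phi_def)
    qed
    show "?C1 \<and> ?C2 \<and> ?C3" using C1 C2 C3 by blast
  next
    assume C: "?C1 \<and> ?C2 \<and> ?C3"
    have C1: ?C1 using C by (rule conjunct1)
    have C2: ?C2 by (rule conjunct1[OF conjunct2[OF C]])
    have C3: ?C3 by (rule conjunct2[OF conjunct2[OF C]])
    have "Sig \<subseteq> phi ` Phi"
    proof
      fix p assume "p \<in> Sig"
      then obtain v S where p: "p = (v, S)" "v \<in> poly_vertices P" "S \<subseteq> In v" by (auto simp: Sig_def)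
      obtain F where F: "F face_of P" "is_sink F Ori v" "\<And>u. Ori u v \<Longrightarrow> convex hull {u, v} \<subseteq> F"
        using bspec[OF C3 p(2)] by (elim exE conjE) (rule that, assumption+, blast)
      have vF: "v \<in> poly_vertices F" using sinkV[OF F(2)] .
      have Fne: "F \<noteq> {}" using vert_in[OF vF] by blast
      have pF: "polytope F" using F face_of_polytope_polytope pP by blast
      have NF: "NB F v = In v"
      proof
        show "NB F v \<subseteq> In v" using sinkIn[OF F(2)] .
        show "In v \<subseteq> NB F v"
        proof
          fix u assume "u \<in> In v"
          hence o: "Ori u v" by (simp add: In_def)
          hence "poly_adj P u v" using assms(3) by (simp add: is_orientation_def)
          moreover have "u \<in> F" "v \<in> F" using F(3)[OF o] hull_subset[of "{u,v}" convex] by auto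
          ultimately show "u \<in> NB F v" using adj_face2[OF F(1)] by simp
        qed
      qed
      have "int (card (NB F v)) = aff_dim F" using C2[rule_format, OF conjI[OF F(1) Fne] F(2)] unfolding degree_in_def .
      then obtain G where G: "G face_of F" "v \<in> G" "NB G v = S"
        using simple_sub_aux[OF pF vF refl, of S] p(3) NF by auto
      have GP: "G face_of P" using G F face_of_trans by blast
      have vG: "v \<in> poly_vertices G" using vert_face2[OF G(1) vF G(2)] .
      have skG: "is_sink G Ori v" unfolding is_sink_def using vG G(3) p(3) by (auto simp: In_def)
      have GPhi: "G \<in> Phi" using GP G(2) by (auto simp: Phi_def)
      have "s G = v" proof -
        have "\<exists>!v. is_sink G Ori v" using C1[rule_format, OF conjI[OF GP]] G(2) by blast
        thus ?thesis using sink_s[OF GPhi] skG by blast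
      qed
      thus "p \<in> phi ` Phi" using GPhi p G(3) by (auto simp: phi_def)
    qed
    thus "phi ` Phi = Sig" using phiSig by blast
  qed
  finally show ?thesis .
qed

end
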